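(* Let $W$ be a well generated complex reflection group and $W_X\le W$ a parabolic subgroup. Then an element $g\in W_X$ is parabolic quasi-Coxeter in $W_X$ if and only if it is parabolic quasi-Coxeter in $W$.
   Context: A complex reflection group $W\le\mathrm{GL}(V)$ is a finite group generated by unitary reflections; its rank is $\operatorname{codim}(V^W)$. A good generating set of a reflection group $G$ is a set of $\operatorname{rank}(G)$ reflections generating $G$; $W$ is well generated if it has one. Parabolic subgroups are pointwise stabilizers of subsets of $V$ (parabolic subgroups of well generated groups are well generated). $\ell_R$ denotes reflection length; a reflection factorization is reduced if its length equals $\ell_R$ of its product (computed in the ambient group considered). An element $g$ of a well generated group $G$ is parabolic quasi-Coxeter in $G$ if some reduced reflection factorization of $g$ in $G$ has factors forming a good generating set of some parabolic subgroup of $G$. *)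

theory Defs
  imports "HOL-Analysis.Analysis"
begin

text \<open>V = complex^'n (a finite-dimensional complex inner product space with the standard
Hermitian form); linear maps of V are matrices complex^'n^'n acting by (*v).\<close>

definition mat_adj :: "complex^'n^'n \<Rightarrow> complex^'n^'n" where
  "mat_adj A = (\<chi> i j. cnj (A $ j $ i))"

definition unitary_mat :: "complex^'n^'n \<Rightarrow> bool" where
  "unitary_mat A \<longleftrightarrow> A ** mat_adj A = mat 1"

definition fixed_space :: "complex^'n^'n \<Rightarrow> (complex^'n) set" where
  "fixed_space g = {v. g *v v = v}"

text \<open>A unitary reflection: a non-identity unitary map of finite order fixing a
hyperplane pointwise (complex dimension measured by vec.dim).\<close>
definition is_reflection :: "complex^'n^'n \<Rightarrow> bool" where
  "is_reflection r \<longleftrightarrow> unitary_mat r \<and> r \<noteq> mat 1 \<and>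
     (\<exists>k>0. (((**) r) ^^ k) (mat 1) = mat 1) \<and>
     vec.dim (fixed_space r) = CARD('n) - 1"

text \<open>Subgroup of GL(V) generated by a set S of (invertible) matrices.\<close>
inductive_set gen :: "(complex^'n^'n) set \<Rightarrow> (complex^'n^'n) set" for S where
  gen_one: "mat 1 \<in> gen S"
| gen_step: "s \<in> S \<Longrightarrow> g \<in> gen S \<Longrightarrow> s ** g \<in> gen S"
| gen_step_inv: "s \<in> S \<Longrightarrow> g \<in> gen S \<Longrightarrow> matrix_inv s ** g \<in> gen S"

definition refls :: "(complex^'n^'n) set \<Rightarrow> (complex^'n^'n) set" where
  "refls G = {r \<in> G. is_reflection r}"

definition refl_group :: "(complex^'n^'n) set \<Rightarrow> bool" where
  "refl_group W \<longleftrightarrow> finite W \<and> (\<exists>R. (\<forall>r\<in>R. is_reflection r) \<and> W = gen R)"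

text \<open>V^G and rank(G) = codim V^G.\<close>
definition fix_set :: "(complex^'n^'n) set \<Rightarrow> (complex^'n) set" where
  "fix_set G = {v. \<forall>g\<in>G. g *v v = v}"

definition refl_rank :: "(complex^'n^'n) set \<Rightarrow> nat" where
  "refl_rank G = CARD('n) - vec.dim (fix_set G)"

definition good_gen_set :: "(complex^'n^'n) set \<Rightarrow> (complex^'n^'n) set \<Rightarrow> bool" where
  "good_gen_set G S \<longleftrightarrow> S \<subseteq> refls G \<and> card S = refl_rank G \<and> gen S = G"

definition well_generated :: "(complex^'n^'n) set \<Rightarrow> bool" where
  "well_generated W \<longleftrightarrow> refl_group W \<and> (\<exists>S. good_gen_set W S)"

text \<open>Parabolic subgroups: pointwise stabilizers in G of subsets of V.\<close>
definition parabolic :: "(complex^'n^'n) set \<Rightarrow> (complex^'n^'n) set \<Rightarrow> bool" where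
  "parabolic G P \<longleftrightarrow> (\<exists>A :: (complex^'n) set. P = {g \<in> G. \<forall>v\<in>A. g *v v = v})"

definition mprod :: "(complex^'n^'n) list \<Rightarrow> complex^'n^'n" where
  "mprod rs = foldr (**) rs (mat 1)"

definition refl_factorization :: "(complex^'n^'n) set \<Rightarrow> complex^'n^'n \<Rightarrow> (complex^'n^'n) list \<Rightarrow> bool" where
  "refl_factorization G g rs \<longleftrightarrow> set rs \<subseteq> refls G \<and> mprod rs = g"

text \<open>Reflection length of g in the ambient group G.\<close>
definition refl_length :: "(complex^'n^'n) set \<Rightarrow> complex^'n^'n \<Rightarrow> nat" where
  "refl_length G g = (LEAST k. \<exists>rs. refl_factorization G g rs \<and> length rs = k)"

definition reduced_refl_factorization :: "(complex^'n^'n) set \<Rightarrow> complex^'n^'n \<Rightarrow> (complex^'n^'n) list \<Rightarrow> bool" where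
  "reduced_refl_factorization G g rs \<longleftrightarrow> refl_factorization G g rs \<and> length rs = refl_length G g"

text \<open>g is parabolic quasi-Coxeter in G: some reduced reflection factorization (in G)
has (pairwise distinct) factors forming a good generating set of a parabolic subgroup of G.\<close>
definition parabolic_quasi_coxeter :: "(complex^'n^'n) set \<Rightarrow> complex^'n^'n \<Rightarrow> bool" where
  "parabolic_quasi_coxeter G g \<longleftrightarrow>
     (\<exists>rs P. reduced_refl_factorization G g rs \<and> distinct rs \<and>
             parabolic G P \<and> good_gen_set P (set rs))"

end

theory Submission
  imports Defs
begin

definition herm :: "complex^'n \<Rightarrow> complex^'n \<Rightarrow> complex" where
  "herm x y = (\<Sum>i\<in>UNIV. x$i * cnj (y$i))"

lemma herm_adj: "herm (A *v x) y = herm x (mat_adj A *v y)"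
proof -
  have "herm (A *v x) y = (\<Sum>i\<in>UNIV. \<Sum>j\<in>UNIV. A$i$j * x$j * cnj (y$i))"
    by (simp add: herm_def matrix_vector_mult_def sum_distrib_right)
  also have "\<dots> = (\<Sum>j\<in>UNIV. \<Sum>i\<in>UNIV. A$i$j * x$j * cnj (y$i))" by (rule sum.swap)
  also have "\<dots> = herm x (mat_adj A *v y)"
    by (simp add: herm_def mat_adj_def matrix_vector_mult_def sum_distrib_left mult_ac)
  finally show ?thesis .
qed

lemma herm_unitary:
  assumes "unitary_mat A" shows "herm (A *v x) (A *v y) = herm x y"
proof -
  have "mat_adj A ** A = mat 1" using assms unfolding unitary_mat_def
    using matrix_left_right_inverse by blast
  then show ?thesis by (simp add: herm_adj matrix_vector_mul_assoc)
qed

lemma herm_add1: "herm (x + y) z = herm x z + herm y z"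
  by (simp add: herm_def distrib_right sum.distrib)
lemma herm_diff1: "herm (x - y) z = herm x z - herm y z"
  by (simp add: herm_def left_diff_distrib sum_subtractf)
lemma herm_scale1: "herm (c *s x) z = c * herm x z"
  by (simp add: herm_def sum_distrib_left mult_ac)
lemma herm_add2: "herm z (x + y) = herm z x + herm z y"
  by (simp add: herm_def distrib_left sum.distrib)
lemma herm_diff2: "herm z (x - y) = herm z x - herm z y"
  by (simp add: herm_def right_diff_distrib sum_subtractf)
lemma herm_scale2: "herm z (c *s x) = cnj c * herm z x"
  by (simp add: herm_def sum_distrib_left mult_ac)
lemma herm_zero1[simp]: "herm 0 z = 0" by (simp add: herm_def)
lemma herm_zero2[simp]: "herm z 0 = 0" by (simp add: herm_def)

lemma herm_self_eq0: assumes "herm x x = 0" shows "x = 0"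
proof -
  have "herm x x = (\<Sum>i\<in>UNIV. complex_of_real ((cmod (x$i))^2))"
    unfolding herm_def by (rule sum.cong) (simp_all add: complex_norm_square[symmetric])
  also have "\<dots> = complex_of_real (\<Sum>i\<in>UNIV. (cmod (x$i))^2)" by simp
  finally have "herm x x = complex_of_real (\<Sum>i\<in>UNIV. (cmod (x$i))^2)" .
  then have "(\<Sum>i\<in>UNIV. (cmod (x$i))^2) = 0" using assms by (metis of_real_eq_0_iff)
  then have "\<forall>i\<in>UNIV. (cmod (x$i))^2 = 0"
    by (subst (asm) sum_nonneg_eq_0_iff) auto
  then show ?thesis by (simp add: vec_eq_iff)
qed

lemma mv_scale: "(A::complex^'n^'m) *v (c *s x) = c *s (A *v x)"
  by (simp add: matrix_vector_mult_def vec_eq_iff sum_distrib_left mult_ac)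

lemma subspace_fixall: "vec.subspace {v::complex^'n. \<forall>t\<in>T. (t::complex^'n^'n) *v v = v}"
  unfolding vec.subspace_def by (simp add: matrix_vector_right_distrib mv_scale)

lemma fixed_space_eq: "fixed_space t = {v. \<forall>s\<in>{t}. s *v v = v}"
  by (simp add: fixed_space_def)

lemma subspace_herm: "vec.subspace {x. herm x a = 0}"
  unfolding vec.subspace_def by (simp add: herm_add1 herm_scale1)
lemma subspace_herm2: "vec.subspace {x. herm a x = 0}"
  unfolding vec.subspace_def by (simp add: herm_add2 herm_scale2)

lemma herm_self_ne0: "x \<noteq> 0 \<Longrightarrow> herm x x \<noteq> 0" using herm_self_eq0 by blast

lemma refl_unitary_invertible:
  assumes "unitary_mat s" shows "invertible s"
  using assms unfolding unitary_mat_def invertible_right_inverse by blast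

lemma refl_orth:
  assumes "unitary_mat s" "u \<in> fixed_space s"
  shows "herm u (s *v v - v) = 0"
proof -
  have "herm u (s *v v) = herm (s *v u) (s *v v)" using assms(2) by (simp add: fixed_space_def)
  also have "\<dots> = herm u v" using herm_unitary[OF assms(1)] by simp
  finally show ?thesis by (simp add: herm_diff2)
qed

lemma dim_n: "vec.dim (UNIV :: (complex^'n) set) = CARD('n)"
  by (rule vec_dim_card)

lemma root_exists:
  assumes "is_reflection (s::complex^'n^'n)"
  shows "\<exists>a. a \<noteq> 0 \<and> fixed_space s = {u. herm u a = 0} \<and> (\<forall>v. s *v v - v \<in> vec.span {a})"
proof -
  have un: "unitary_mat s" and ne: "s \<noteq> mat 1" and dimF: "vec.dim (fixed_space s) = CARD('n) - 1"
    using assms unfolding is_reflection_def by auto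
  obtain w where w: "s *v w \<noteq> w"
    using ne matrix_eq[of s "mat 1"] by auto
  define a where "a = s *v w - w"
  have a0: "a \<noteq> 0" using w by (simp add: a_def)
  define H where "H = {u. herm u a = 0}"
  have subH: "vec.subspace H" unfolding H_def by (rule subspace_herm)
  have subF: "vec.subspace (fixed_space s)"
    using subspace_fixall[of "{s}"] by (simp add: fixed_space_eq)
  have FH: "fixed_space s \<subseteq> H"
    unfolding H_def a_def using refl_orth[OF un] by blast
  have aH: "a \<notin> H" unfolding H_def using herm_self_ne0[OF a0] by simp
  have "vec.span H \<subset> vec.span UNIV"
    using aH subH by (auto simp: vec.span_eq_iff[THEN iffD2])
  then have "vec.dim H < vec.dim (UNIV::(complex^'n) set)" by (rule vec.dim_psubset)
  then have "vec.dim H < CARD('n)" by (simp only: vec_dim_card)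
  then have "vec.dim H \<le> vec.dim (fixed_space s)" using dimF by simp
  then have HF: "fixed_space s = H"
    using vec.subspace_dim_equal[OF subF subH FH] by simp
  have "s *v v - v \<in> vec.span {a}" for v
  proof -
    define x where "x = s *v v - v"
    define c where "c = herm x a / herm a a"
    define y where "y = x - c *s a"
    have "herm y a = herm x a - c * herm a a" by (simp add: y_def herm_diff1 herm_scale1)
    then have "herm y a = 0" using herm_self_ne0[OF a0] by (simp add: c_def)
    then have yF: "y \<in> fixed_space s" using HF H_def by simp
    have "herm y x = 0" using refl_orth[OF un yF] by (simp add: x_def)
    moreover have "herm y (c *s a) = 0" using \<open>herm y a = 0\<close> by (simp add: herm_scale2)
    ultimately have "herm y y = 0" by (simp add: y_def herm_diff2)
    then have "y = 0" by (rule herm_self_eq0)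
    then have "x = c *s a" by (simp add: y_def)
    then show ?thesis by (auto simp add: x_def vec.span_singleton)
  qed
  then show ?thesis using a0 HF H_def by blast
qed

definition root :: "complex^'n^'n \<Rightarrow> complex^'n" where
  "root s = (SOME a. a \<noteq> 0 \<and> fixed_space s = {u. herm u a = 0} \<and> (\<forall>v. s *v v - v \<in> vec.span {a}))"

lemma root_props:
  assumes "is_reflection s"
  shows "root s \<noteq> 0" "fixed_space s = {u. herm u (root s) = 0}" "s *v v - v \<in> vec.span {root s}"
  using someI_ex[OF root_exists[OF assms]] unfolding root_def by blast+

lemma span_mprod:
  assumes "\<forall>t\<in>set ts. is_reflection t"
  shows "mprod ts *v v - v \<in> vec.span (root ` set ts)"
  using assms
proof (induction ts arbitrary: v)
  case Nil
  then show ?case by (simp add: mprod_def vec.span_zero)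
next
  case (Cons t ts)
  let ?h = "mprod ts"
  have eq: "mprod (t # ts) *v v - v = (t *v (?h *v v) - ?h *v v) + (?h *v v - v)"
    by (simp add: mprod_def matrix_vector_mul_assoc[symmetric])
  have "t *v (?h *v v) - ?h *v v \<in> vec.span {root t}" using Cons.prems root_props(3)[of t] by simp
  then have 1: "t *v (?h *v v) - ?h *v v \<in> vec.span (root ` set (t # ts))"
    using vec.span_mono[of "{root t}" "root ` set (t # ts)"] by auto
  have "?h *v v - v \<in> vec.span (root ` set ts)" using Cons.IH[of v] Cons.prems by simp
  then have 2: "?h *v v - v \<in> vec.span (root ` set (t # ts))"
    using vec.span_mono[of "root ` set ts" "root ` set (t # ts)"] by auto
  show ?case unfolding eq using 1 2 by (rule vec.span_add)
qed

lemma fix_mprod: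
  assumes "distinct ts" "\<forall>t\<in>set ts. is_reflection t" "inj_on root (set ts)"
    "vec.independent (root ` set ts)" "mprod ts *v v = v"
  shows "\<forall>t\<in>set ts. t *v v = v"
  using assms
proof (induction ts)
  case Nil
  then show ?case by simp
next
  case (Cons t ts)
  let ?h = "mprod ts"
  have tv: "t *v (?h *v v) = v" using Cons.prems(5) by (simp add: mprod_def matrix_vector_mul_assoc[symmetric])
  define x where "x = ?h *v v - v"
  have x1: "x \<in> vec.span (root ` set ts)" using span_mprod[of ts v] Cons.prems(2) by (simp add: x_def)
  have "t *v (?h *v v) - ?h *v v \<in> vec.span {root t}" using Cons.prems(2) root_props(3)[of t] by simp
  then have "- x \<in> vec.span {root t}" using tv by (simp add: x_def)
  then have "x \<in> vec.span {root t}" using vec.span_neg by fastforce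
  then obtain c where c: "x = c *s root t" by (auto simp: vec.span_singleton)
  have notin: "root t \<notin> root ` set ts"
    using Cons.prems(1,3) by (auto simp: inj_on_def)
  have ind: "vec.independent (insert (root t) (root ` set ts))" using Cons.prems(4) by simp
  have rt: "root t \<notin> vec.span (root ` set ts)"
    using ind notin vec.independent_insert[of "root t" "root ` set ts"] by simp
  have "c = 0"
  proof (rule ccontr)
    assume "c \<noteq> 0"
    then have "root t = inverse c *s x" using c by simp
    then have "root t \<in> vec.span (root ` set ts)" using vec.span_scale[OF x1, of "inverse c"] by simp
    then show False using rt by simp
  qed
  then have "x = 0" using c by simp
  then have hv: "?h *v v = v" by (simp add: x_def)
  then have "t *v v = v" using tv by simp
  moreover have "\<forall>t\<in>set ts. t *v v = v"
    using Cons.IH Cons.prems hv vec.independent_mono[of "root ` set (t#ts)" "root ` set ts"]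
    by (auto simp: inj_on_def)
  ultimately show ?case by simp
qed

lemma dim_le_n: "vec.dim (S::(complex^'n) set) \<le> CARD('n)"
proof -
  have "vec.dim S \<le> vec.dim (UNIV::(complex^'n) set)" by (rule vec.dim_subset) simp
  then show ?thesis by (simp only: vec_dim_card)
qed

lemma card_pos: "CARD('n::finite) \<ge> 1"
  by (simp add: Suc_leI)

lemma hyper_dim:
  assumes "finite T" "\<forall>t\<in>T. is_reflection (t::complex^'n^'n)"
  shows "vec.dim {v. \<forall>t\<in>T. t *v v = v} + card T \<ge> CARD('n)"
  using assms
proof (induction T rule: finite_induct)
  case empty
  then show ?case by (simp del: vec.dim_UNIV add: vec_dim_card)
next
  case (insert t T)
  define X where "X = {v::complex^'n. \<forall>t\<in>T. t *v v = v}"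
  have eq: "{v. \<forall>s\<in>insert t T. s *v v = v} = fixed_space t \<inter> X"
    by (auto simp: X_def fixed_space_def)
  have sF: "vec.subspace (fixed_space t)" using subspace_fixall[of "{t}"] by (simp add: fixed_space_eq)
  have sX: "vec.subspace X" unfolding X_def by (rule subspace_fixall)
  have dF: "vec.dim (fixed_space t) = CARD('n) - 1" using insert.prems unfolding is_reflection_def by simp
  have IH: "vec.dim X + card T \<ge> CARD('n)" using insert X_def by simp
  have "vec.dim {x + y |x y. x \<in> fixed_space t \<and> y \<in> X} + vec.dim (fixed_space t \<inter> X)
        = vec.dim (fixed_space t) + vec.dim X" by (rule vec.dim_sums_Int[OF sF sX])
  moreover have "vec.dim {x + y |x y. x \<in> fixed_space t \<and> y \<in> X} \<le> CARD('n)"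
    by (rule dim_le_n)
  ultimately have "vec.dim (fixed_space t \<inter> X) + CARD('n) \<ge> CARD('n) - 1 + vec.dim X" using dF by linarith
  then show ?case using IH eq insert.hyps card_pos[where 'n='n] by simp
qed

lemma fix_gen:
  assumes "\<forall>s\<in>S. is_reflection (s::complex^'n^'n)"
  shows "fix_set (gen S) = {v. \<forall>s\<in>S. s *v v = v}"
proof
  show "fix_set (gen S) \<subseteq> {v. \<forall>s\<in>S. s *v v = v}"
  proof (clarsimp simp: fix_set_def)
    fix v s assume "\<forall>g\<in>gen S. g *v v = v" "s \<in> S"
    moreover have "s \<in> gen S" using gen.gen_step[OF \<open>s \<in> S\<close> gen.gen_one] by simp
    ultimately show "s *v v = v" by blast
  qed
next
  show "{v. \<forall>s\<in>S. s *v v = v} \<subseteq> fix_set (gen S)"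
  proof (clarsimp simp: fix_set_def)
    fix v g assume v: "\<forall>s\<in>S. s *v v = v" and "g \<in> gen S"
    from \<open>g \<in> gen S\<close> show "g *v v = v"
    proof (induction g rule: gen.induct)
      case gen_one
      then show ?case by simp
    next
      case (gen_step s g)
      then show ?case using v by (simp add: matrix_vector_mul_assoc[symmetric])
    next
      case (gen_step_inv s g)
      have "invertible s" using assms gen_step_inv refl_unitary_invertible is_reflection_def by blast
      then have "matrix_inv s ** s = mat 1"
        unfolding matrix_inv_def invertible_def by (rule someI2_ex) auto
      then have "matrix_inv s *v (s *v v) = v" by (simp add: matrix_vector_mul_assoc)
      then show ?case using gen_step_inv v by (simp add: matrix_vector_mul_assoc[symmetric])
    qed
  qed
qed

lemma mprod_in_gen: "set rs \<subseteq> S \<Longrightarrow> mprod rs \<in> gen S"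
  by (induction rs) (auto simp: mprod_def intro: gen.intros)

lemma indep_from_dim:
  assumes "finite S" "\<forall>s\<in>S. is_reflection (s::complex^'n^'n)" "card S \<le> CARD('n)"
    "vec.dim {v. \<forall>s\<in>S. s *v v = v} = CARD('n) - card S"
  shows "inj_on root S \<and> vec.independent (root ` S)"
proof (rule ccontr)
  assume neg: "\<not> ?thesis"
  then obtain s0 where s0: "s0 \<in> S" "root s0 \<in> vec.span (root ` (S - {s0}))"
  proof (cases "inj_on root S")
    case False
    then obtain s0 s1 where "s0 \<in> S" "s1 \<in> S" "s0 \<noteq> s1" "root s0 = root s1"
      by (auto simp: inj_on_def)
    then have "root s0 \<in> root ` (S - {s0})" by auto
    then show ?thesis by (rule that[OF \<open>s0 \<in> S\<close> vec.span_base])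
  next
    case True
    then have "vec.dependent (root ` S)" using neg by simp
    then obtain a where "a \<in> root ` S" "a \<in> vec.span (root ` S - {a})"
      unfolding vec.dependent_def by blast
    then obtain s0 where "s0 \<in> S" "a = root s0" by auto
    moreover have "root ` S - {a} \<subseteq> root ` (S - {s0})" using \<open>a = root s0\<close> by auto
    ultimately have "root s0 \<in> vec.span (root ` (S - {s0}))"
      using \<open>a \<in> vec.span (root ` S - {a})\<close> vec.span_mono by blast
    then show ?thesis by (rule that[OF \<open>s0 \<in> S\<close>])
  qed
  have eq: "{v. \<forall>s\<in>S. s *v v = v} = {v. \<forall>s\<in>S - {s0}. s *v v = v}"
  proof (intro set_eqI iffI)
    fix v assume "v \<in> {v. \<forall>s\<in>S - {s0}. s *v v = v}"
    then have v: "\<forall>s\<in>S - {s0}. s *v v = v" by simp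
    have "\<forall>s\<in>S - {s0}. herm v (root s) = 0"
    proof
      fix s assume s: "s \<in> S - {s0}"
      then have "s *v v = v" using v by blast
      then have "v \<in> fixed_space s" by (simp add: fixed_space_def)
      then show "herm v (root s) = 0" using root_props(2)[of s] assms(2) s by auto
    qed
    then have "root ` (S - {s0}) \<subseteq> {x. herm v x = 0}" by auto
    then have "vec.span (root ` (S - {s0})) \<subseteq> {x. herm v x = 0}"
      using vec.span_minimal subspace_herm2 by blast
    then have "herm v (root s0) = 0" using s0 by auto
    then have "s0 *v v = v" using root_props(2)[of s0] assms(2) s0(1) by (auto simp: fixed_space_def)
    then show "v \<in> {v. \<forall>s\<in>S. s *v v = v}" using v by auto
  qed auto
  have "vec.dim {v. \<forall>s\<in>S - {s0}. s *v v = v} + card (S - {s0}) \<ge> CARD('n)"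
    using hyper_dim[of "S - {s0}"] assms by auto
  moreover have "card (S - {s0}) = card S - 1" using s0 assms by simp
  moreover have "card S \<ge> 1" using s0(1) assms(1) by (simp add: Suc_le_eq card_gt_0_iff) blast
  ultimately show False using assms(3,4) eq by simp
qed

lemma core:
  fixes P :: "(complex^'n^'n) set"
  assumes "good_gen_set P (set rs)" "distinct rs"
  shows "fixed_space (mprod rs) = fix_set P"
    "length rs = CARD('n) - vec.dim (fix_set P)" "length rs \<le> CARD('n)"
proof -
  have refl: "\<forall>s\<in>set rs. is_reflection s" using assms(1) by (auto simp: good_gen_set_def refls_def)
  have gP: "gen (set rs) = P" using assms(1) by (simp add: good_gen_set_def)
  have len: "length rs = CARD('n) - vec.dim (fix_set P)"
    using assms distinct_card[of rs] by (simp add: good_gen_set_def refl_rank_def)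
  then show "length rs = CARD('n) - vec.dim (fix_set P)" .
  show le: "length rs \<le> CARD('n)" using len by simp
  have dle: "vec.dim (fix_set P) \<le> CARD('n)"
    by (rule dim_le_n)
  have FP: "fix_set P = {v. \<forall>s\<in>set rs. s *v v = v}" using fix_gen[OF refl] gP by simp
  have "vec.dim {v. \<forall>s\<in>set rs. s *v v = v} = CARD('n) - card (set rs)"
    using len dle FP distinct_card[OF assms(2)] by simp
  then have ind: "inj_on root (set rs) \<and> vec.independent (root ` set rs)"
    using indep_from_dim[of "set rs"] refl le distinct_card[OF assms(2)] by simp
  show "fixed_space (mprod rs) = fix_set P"
  proof
    show "fixed_space (mprod rs) \<subseteq> fix_set P"
      using fix_mprod[OF assms(2) refl] ind FP by (auto simp: fixed_space_def)
    have "mprod rs \<in> P" using mprod_in_gen[of rs "set rs"] gP by simp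
    then show "fix_set P \<subseteq> fixed_space (mprod rs)" by (auto simp: fix_set_def fixed_space_def)
  qed
qed

lemma fix_mprod_sup: "{v. \<forall>t\<in>set ts. t *v v = v} \<subseteq> fixed_space (mprod ts)"
proof
  fix v assume "v \<in> {v. \<forall>t\<in>set ts. t *v v = v}"
  then show "v \<in> fixed_space (mprod ts)"
    by (induction ts) (auto simp: fixed_space_def mprod_def matrix_vector_mul_assoc[symmetric])
qed

lemma length_lower:
  fixes P :: "(complex^'n^'n) set"
  assumes "good_gen_set P (set rs)" "distinct rs" "refl_factorization G (mprod rs) ts"
  shows "length rs \<le> length ts"
proof -
  have refl: "\<forall>t\<in>set ts. is_reflection t" using assms(3) by (auto simp: refl_factorization_def refls_def)
  have g: "mprod ts = mprod rs" using assms(3) by (simp add: refl_factorization_def)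
  have "vec.dim {v. \<forall>t\<in>set ts. t *v v = v} \<le> vec.dim (fixed_space (mprod rs))"
    using vec.dim_subset[OF fix_mprod_sup[of ts]] g by simp
  moreover have "vec.dim {v. \<forall>t\<in>set ts. t *v v = v} + card (set ts) \<ge> CARD('n)"
    using hyper_dim[of "set ts"] refl by simp
  moreover have "card (set ts) \<le> length ts" by (rule card_length)
  moreover have "vec.dim (fixed_space (mprod rs)) = vec.dim (fix_set P)"
    using core(1)[OF assms(1,2)] by simp
  moreover have "length rs = CARD('n) - vec.dim (fix_set P)" by (rule core(2)[OF assms(1,2)])
  moreover have "vec.dim (fix_set P) \<le> CARD('n)" by (rule dim_le_n)
  ultimately show ?thesis by linarith
qed

theorem mainTheorem6:
  fixes W WX :: "(complex^'n^'n) set" and g :: "complex^'n^'n"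
  assumes "well_generated W"
    and "parabolic W WX"
    and "g \<in> WX"
  shows "parabolic_quasi_coxeter WX g \<longleftrightarrow> parabolic_quasi_coxeter W g"
proof -
  obtain A where WX: "WX = {h \<in> W. \<forall>v\<in>A. h *v v = v}" using assms(2) by (auto simp: parabolic_def)
  have WXW: "WX \<subseteq> W" using WX by auto
  show ?thesis
  proof
    assume "parabolic_quasi_coxeter WX g"
    then obtain rs P where red: "reduced_refl_factorization WX g rs" and d: "distinct rs"
      and par: "parabolic WX P" and gg: "good_gen_set P (set rs)"
      unfolding parabolic_quasi_coxeter_def by blast
    have fac: "refl_factorization W g rs"
      using red WXW by (auto simp: reduced_refl_factorization_def refl_factorization_def refls_def)
    have gm: "g = mprod rs" using red by (simp add: reduced_refl_factorization_def refl_factorization_def)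
    have "refl_length W g = length rs"
      unfolding refl_length_def
    proof (rule Least_equality)
      show "\<exists>ts. refl_factorization W g ts \<and> length ts = length rs" using fac by blast
      show "\<And>k. \<exists>ts. refl_factorization W g ts \<and> length ts = k \<Longrightarrow> length rs \<le> k"
        using length_lower[OF gg d] gm by blast
    qed
    then have red': "reduced_refl_factorization W g rs"
      using fac by (simp add: reduced_refl_factorization_def)
    obtain B where PB: "P = {h \<in> WX. \<forall>v\<in>B. h *v v = v}" using par by (auto simp: parabolic_def)
    have "P = {h \<in> W. \<forall>v\<in>A \<union> B. h *v v = v}" using PB WX by auto
    then have "parabolic W P" unfolding parabolic_def by blast
    then show "parabolic_quasi_coxeter W g"
      unfolding parabolic_quasi_coxeter_def using red' d gg by blast
  next
    assume "parabolic_quasi_coxeter W g"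
    then obtain rs P where red: "reduced_refl_factorization W g rs" and d: "distinct rs"
      and par: "parabolic W P" and gg: "good_gen_set P (set rs)"
      unfolding parabolic_quasi_coxeter_def by blast
    have gm: "g = mprod rs" using red by (simp add: reduced_refl_factorization_def refl_factorization_def)
    obtain B where PB: "P = {h \<in> W. \<forall>v\<in>B. h *v v = v}" using par by (auto simp: parabolic_def)
    have "A \<subseteq> fixed_space g" using assms(3) WX by (auto simp: fixed_space_def)
    then have "A \<subseteq> fix_set P" using core(1)[OF gg d] gm by simp
    then have PWX: "P \<subseteq> WX" using PB WX by (auto simp: fix_set_def)
    have "P = {h \<in> WX. \<forall>v\<in>B. h *v v = v}" using PB PWX WXW by auto
    then have par': "parabolic WX P" unfolding parabolic_def by blast
    have "set rs \<subseteq> refls P" using gg by (simp add: good_gen_set_def)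
    then have fac: "refl_factorization WX g rs"
      using PWX gm by (auto simp: refl_factorization_def refls_def)
    have "refl_length WX g = length rs"
      unfolding refl_length_def
    proof (rule Least_equality)
      show "\<exists>ts. refl_factorization WX g ts \<and> length ts = length rs" using fac by blast
      show "\<And>k. \<exists>ts. refl_factorization WX g ts \<and> length ts = k \<Longrightarrow> length rs \<le> k"
        using length_lower[OF gg d] gm by blast
    qed
    then have red': "reduced_refl_factorization WX g rs"
      using fac by (simp add: reduced_refl_factorization_def)
    then show "parabolic_quasi_coxeter WX g"
      unfolding parabolic_quasi_coxeter_def using par' d gg by blast
  qed
qed

end
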